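(* Let $K\subset M^{m\times n}$ be a linear subspace. Let $M_1,\dots,M_{q_1}:M^{m\times n}\to\mathbb{R}$ be all the minors of $m\times n$ matrices, and let $M_{q_1+1},\dots,M_{q_1+mn}:M^{m\times n}\to\mathbb{R}$ be the projections onto the $mn$ entries. Then $\mathcal{M}^{pc}(K)$ consists of Dirac measures if and only if the following holds: for each non-trivial algebraic cone $V\subset K$ there exists $\beta\in\mathbb{R}^{q_1+mn}\setminus\{0\}$ such that $\sum_{k=1}^{q_1+mn}\beta_k M_k(\zeta)\ge 0$ for all $\zeta\in V$ and $\sum_{k=1}^{q_1+mn}\beta_k M_k\not\equiv 0$ on $V$.
   Context: $M^{m\times n}$ denotes real $m\times n$ matrices, identified with $\mathbb{R}^{mn}$. For $X\in M^{m\times n}$, $\hat X$ is the vector of all minors of $X$; a function $f:M^{m\times n}\to\mathbb{R}$ is polyconvex if $f(X)=g(\hat X)$ for some convex $g$. For a set $\mathcal{K}\subset M^{m\times n}$, $\mathcal{M}^{pc}(\mathcal{K})$ is the set of probability measures $\nu$ on $M^{m\times n}$ with $\mathrm{Spt}\,\nu\subset\mathcal{K}$ and $\int f\,d\nu\ge f(\overline X)$ for all polyconvex $f$, where $\overline X=\int X\,d\nu(X)$ (equivalently $\int M(X)\,d\nu=M(\overline X)$ for every minor $M$). A set $S\subset\mathbb{R}^N$ is a cone if $\lambda x\in S$ whenever $x\in S$, $\lambda>0$; an algebraic set is the common zero locus of a collection of real polynomials; an algebraic cone is a cone that is an algebraic set. Non-trivial means not equal to $\{0\}$. *)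

theory Defs
  imports "HOL-Probability.Probability"
begin

text \<open>Matrices in M^{m x n} are elements of real^'n^'m (rows indexed by 'm, columns by 'n).
  The index types carry a linear order only to fix an enumeration of the rows/columns
  used when forming minors (a different order changes minors only by sign).\<close>

definition leibniz_det :: "nat \<Rightarrow> (nat \<Rightarrow> nat \<Rightarrow> real) \<Rightarrow> real" where
  "leibniz_det k A = (\<Sum>p | p permutes {..<k}. of_int (sign p) * (\<Prod>i<k. A i (p i)))"

definition minor :: "('m::{finite,linorder}) set \<Rightarrow> ('n::{finite,linorder}) set \<Rightarrow> real^('n::{finite,linorder})^('m::{finite,linorder}) \<Rightarrow> real" where
  "minor I J X = leibniz_det (card I)
      (\<lambda>a b. X $ (sorted_list_of_set I ! a) $ (sorted_list_of_set J ! b))"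

definition minor_idx :: "(('m::{finite,linorder}) set \<times> ('n::{finite,linorder}) set) set" where
  "minor_idx = {(I, J). I \<noteq> {} \<and> card I = card J}"

definition msupport :: "'a::metric_space measure \<Rightarrow> 'a set" where
  "msupport \<nu> = {x. \<forall>e>0. emeasure \<nu> (ball x e) \<noteq> 0}"

text \<open>Polyconvex measures supported in K (stated via minors, as in the paper).\<close>
definition pc_measures ::
  "(real^('n::{finite,linorder})^('m::{finite,linorder})) set \<Rightarrow> (real^('n::{finite,linorder})^('m::{finite,linorder})) measure set" where
  "pc_measures K = {\<nu>. prob_space \<nu> \<and> sets \<nu> = sets borel \<and> msupport \<nu> \<subseteq> K \<and>
      integrable \<nu> (\<lambda>X. X) \<and>
      (\<forall>(I, J) \<in> minor_idx. integrable \<nu> (minor I J) \<and>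
         (\<integral>X. minor I J X \<partial>\<nu>) = minor I J (\<integral>X. X \<partial>\<nu>))}"

inductive_set poly_fun :: "('a::euclidean_space \<Rightarrow> real) set" where
  const: "(\<lambda>x. c) \<in> poly_fun"
| coord: "b \<in> Basis \<Longrightarrow> (\<lambda>x. x \<bullet> b) \<in> poly_fun"
| add: "p \<in> poly_fun \<Longrightarrow> q \<in> poly_fun \<Longrightarrow> (\<lambda>x. p x + q x) \<in> poly_fun"
| mult: "p \<in> poly_fun \<Longrightarrow> q \<in> poly_fun \<Longrightarrow> (\<lambda>x. p x * q x) \<in> poly_fun"

definition algebraic_set :: "'a::euclidean_space set \<Rightarrow> bool" where
  "algebraic_set V \<longleftrightarrow> (\<exists>P \<subseteq> poly_fun. V = {x. \<forall>p\<in>P. p x = 0})"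

definition is_cone :: "'a::real_vector set \<Rightarrow> bool" where
  "is_cone V \<longleftrightarrow> (\<forall>x\<in>V. \<forall>c>0. c *\<^sub>R x \<in> V)"

definition algebraic_cone :: "'a::euclidean_space set \<Rightarrow> bool" where
  "algebraic_cone V \<longleftrightarrow> is_cone V \<and> algebraic_set V"

definition minor_comb ::
  "(('m::{finite,linorder}) set \<times> ('n::{finite,linorder}) set \<Rightarrow> real) \<Rightarrow> (('m::{finite,linorder}) \<times> ('n::{finite,linorder}) \<Rightarrow> real)
     \<Rightarrow> real^('n::{finite,linorder})^('m::{finite,linorder}) \<Rightarrow> real" where
  "minor_comb \<beta> \<gamma> X = (\<Sum>IJ\<in>minor_idx. \<beta> IJ * minor (fst IJ) (snd IJ) X)
      + (\<Sum>i\<in>UNIV. \<Sum>j\<in>UNIV. \<gamma> (i, j) * X $ i $ j)"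

end

theory Submission
  imports Defs "Jordan_Normal_Form.Determinant"
begin

no_notation Matrix.vec_index (infixl "$" 100)

definition lagr :: "(real^('n::{finite,linorder})^('m::{finite,linorder}) \<Rightarrow> real) set" where
  "lagr = {f. \<exists>c0 c. \<forall>X. f X = c0 + (\<Sum>IJ\<in>minor_idx. c IJ * minor (fst IJ) (snd IJ) X)}"

lemma finite_minor_idx: "finite (minor_idx :: (('m::{finite,linorder}) set \<times> ('n::{finite,linorder}) set) set)"
  by (rule finite_subset[of _ UNIV]) auto

lemma lagr_const: "(\<lambda>X. c) \<in> lagr"
  unfolding lagr_def by (rule CollectI, rule exI[of _ c], rule exI[of _ "\<lambda>_. 0"]) simp

lemma lagr_minor: "(I, J) \<in> minor_idx \<Longrightarrow> minor I J \<in> lagr"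
proof -
  assume a: "(I, J) \<in> minor_idx"
  have "\<forall>X. minor I J X = 0 + (\<Sum>IJ\<in>minor_idx. (if IJ = (I,J) then 1 else 0) * minor (fst IJ) (snd IJ) X)"
  proof
    fix X
    have "(\<Sum>IJ\<in>minor_idx. (if IJ = (I,J) then 1 else 0) * minor (fst IJ) (snd IJ) X)
       = (\<Sum>IJ\<in>minor_idx. (if IJ = (I,J) then minor (fst IJ) (snd IJ) X else 0))"
      by (rule sum.cong) auto
    also have "\<dots> = minor I J X" using a finite_minor_idx by (subst sum.delta) auto
    finally show "minor I J X = 0 + (\<Sum>IJ\<in>minor_idx. (if IJ = (I,J) then 1 else 0) * minor (fst IJ) (snd IJ) X)" by simp
  qed
  then show ?thesis unfolding lagr_def mem_Collect_eq apply - apply (rule exI)+ by assumption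
qed

lemma lagr_add: "f \<in> lagr \<Longrightarrow> g \<in> lagr \<Longrightarrow> (\<lambda>X. f X + g X) \<in> lagr"
proof -
  assume "f \<in> lagr" "g \<in> lagr"
  then obtain a c b d where f: "\<forall>X. f X = a + (\<Sum>IJ\<in>minor_idx. c IJ * minor (fst IJ) (snd IJ) X)"
    and g: "\<forall>X. g X = b + (\<Sum>IJ\<in>minor_idx. d IJ * minor (fst IJ) (snd IJ) X)" unfolding lagr_def by blast
  have "\<forall>X. f X + g X = (a + b) + (\<Sum>IJ\<in>minor_idx. (c IJ + d IJ) * minor (fst IJ) (snd IJ) X)"
    using f g by (simp add: distrib_right sum.distrib)
  then show ?thesis unfolding lagr_def mem_Collect_eq apply - apply (rule exI)+ by assumption
qed

lemma lagr_scale: "f \<in> lagr \<Longrightarrow> (\<lambda>X. r * f X) \<in> lagr"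
proof -
  assume "f \<in> lagr"
  then obtain a c where f: "\<forall>X. f X = a + (\<Sum>IJ\<in>minor_idx. c IJ * minor (fst IJ) (snd IJ) X)"
    unfolding lagr_def by blast
  have "\<forall>X. r * f X = (r * a) + (\<Sum>IJ\<in>minor_idx. (r * c IJ) * minor (fst IJ) (snd IJ) X)"
    using f by (simp add: distrib_left sum_distrib_left mult.assoc)
  then show ?thesis unfolding lagr_def mem_Collect_eq apply - apply (rule exI)+ by assumption
qed

lemma lagr_sum: "finite S \<Longrightarrow> (\<And>s. s \<in> S \<Longrightarrow> f s \<in> lagr) \<Longrightarrow> (\<lambda>X. \<Sum>s\<in>S. f s X) \<in> lagr"
proof (induction S rule: finite_induct)
  case empty then show ?case using lagr_const[of 0] by simp
next
  case (insert x F) then show ?case using lagr_add[of "f x" "\<lambda>X. \<Sum>s\<in>F. f s X"] by simp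
qed

lemma det_leib: "Determinant.det (Matrix.mat k k (\<lambda>(a,b). f a b)) = leibniz_det k f"
proof -
  have "Determinant.det (Matrix.mat k k (\<lambda>(a,b). f a b)) =
     (\<Sum>p\<in>{p. p permutes {0..<k}}. of_int (sign p) * (\<Prod>i = 0..<k. Matrix.mat k k (\<lambda>(a,b). f a b) $$ (i, p i)))"
    by (rule det_def') simp
  also have "\<dots> = (\<Sum>p\<in>{p. p permutes {..<k}}. of_int (sign p) * (\<Prod>i<k. f i (p i)))"
  proof (rule sum.cong)
    show "{p. p permutes {0..<k}} = {p. p permutes {..<k}}" by (simp add: atLeast0LessThan)
  next
    fix p assume "p \<in> {p. p permutes {..<k}}"
    then have "\<And>i. i < k \<Longrightarrow> p i < k" by (auto dest: permutes_in_image)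
    then show "of_int (sign p) * (\<Prod>i = 0..<k. Matrix.mat k k (\<lambda>(a,b). f a b) $$ (i, p i)) =
         of_int (sign p) * (\<Prod>i<k. f i (p i))"
      by (simp add: atLeast0LessThan)
  qed
  finally show ?thesis unfolding leibniz_det_def by simp
qed

lemma leib0: "leibniz_det 0 f = 1"
  unfolding leibniz_det_def by simp

definition del :: "nat \<Rightarrow> 'a list \<Rightarrow> 'a list" where
  "del i xs = take i xs @ drop (Suc i) xs"

lemma length_del: "i < length xs \<Longrightarrow> length (del i xs) = length xs - 1"
  unfolding del_def by simp

lemma nth_del: "i < length xs \<Longrightarrow> a < length xs - 1 \<Longrightarrow> del i xs ! a = xs ! (if a < i then a else Suc a)"
  unfolding del_def by (auto simp: nth_append min_def)

lemma set_del: "set (del i xs) \<subseteq> set xs"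
  unfolding del_def by (auto dest: in_set_takeD in_set_dropD)

lemma distinct_del: "distinct xs \<Longrightarrow> distinct (del i xs)"
proof -
  assume d: "distinct xs"
  have "set (take i xs) \<inter> set (drop (Suc i) xs) = {}"
    using set_take_disj_set_drop_if_distinct[OF d, of i "Suc i"] by simp
  then show ?thesis unfolding del_def using d by simp
qed

lemma sorted_del: "sorted xs \<Longrightarrow> sorted (del i xs)"
proof -
  assume s: "sorted xs"
  then have "sorted (take i xs @ drop i xs)" by simp
  then have 1: "sorted (take i xs)" and 2: "\<forall>x\<in>set (take i xs). \<forall>y\<in>set (drop i xs). x \<le> y"
    unfolding sorted_append by auto
  have 3: "sorted (drop (Suc i) xs)" using s by (rule sorted_wrt_drop)
  have 4: "set (drop (Suc i) xs) \<subseteq> set (drop i xs)" by (rule set_drop_subset_set_drop) simp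
  show ?thesis unfolding del_def sorted_append using 1 2 3 4 by blast
qed

lemma notin_del: "distinct xs \<Longrightarrow> i < length xs \<Longrightarrow> xs ! i \<notin> set (del i xs)"
proof -
  assume d: "distinct xs" and i: "i < length xs"
  have "distinct (take i xs @ xs ! i # drop (Suc i) xs)"
    using d i by (simp add: Cons_nth_drop_Suc)
  then show ?thesis unfolding del_def by auto
qed

definition mixmat :: "('m::{finite,linorder}) list \<Rightarrow> ('n::{finite,linorder}) list \<Rightarrow> ('m::{finite,linorder}) set \<Rightarrow> (('m::{finite,linorder}) \<Rightarrow> ('n::{finite,linorder}) \<Rightarrow> real)
   \<Rightarrow> real^('n::{finite,linorder})^('m::{finite,linorder}) \<Rightarrow> real mat" where
  "mixmat rs cs R C X = Matrix.mat (length rs) (length rs)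
     (\<lambda>(a,b). X $ (rs!a) $ (cs!b) + (if rs!a \<in> R then C (rs!a) (cs!b) else 0))"

lemma mixmat_carrier: "mixmat rs cs R C X \<in> carrier_mat (length rs) (length rs)"
  unfolding mixmat_def by simp

lemma mixmat_cong: "(\<And>x. x \<in> set rs \<Longrightarrow> x \<in> R \<longleftrightarrow> x \<in> R') \<Longrightarrow> mixmat rs cs R C X = mixmat rs cs R' C X"
  unfolding mixmat_def by (intro cong_mat) auto

lemma mixmat_delete:
  assumes "i < length rs" "j < length rs" "length cs = length rs"
  shows "mat_delete (mixmat rs cs R C X) i j = mixmat (del i rs) (del j cs) R C X"
  unfolding mat_delete_def mixmat_def using assms
  by (intro eq_matI) (auto simp: length_del nth_del)

lemma mix_base:
  assumes "sorted rs" "distinct rs" "sorted cs" "distinct cs" "length cs = length rs"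
    and "R \<inter> set rs = {}"
  shows "(\<lambda>X. Determinant.det (mixmat rs cs R C X)) \<in> lagr"
proof -
  let ?k = "length rs"
  have e: "mixmat rs cs R C X = Matrix.mat ?k ?k (\<lambda>(a,b). (\<lambda>a b. X $ (rs!a) $ (cs!b)) a b)" for X
    unfolding mixmat_def using assms(6) by (intro cong_mat) auto
  show ?thesis
  proof (cases "rs = []")
    case True
    then show ?thesis unfolding e det_leib using leib0 lagr_const by simp
  next
    case False
    have sr: "sorted_list_of_set (set rs) = rs" "sorted_list_of_set (set cs) = cs"
      using assms by (auto intro: sorted_list_of_set.idem_if_sorted_distinct)
    have c: "card (set rs) = ?k" "card (set cs) = ?k" using assms distinct_card by metis+
    have m: "leibniz_det ?k (\<lambda>a b. X $ (rs!a) $ (cs!b)) = minor (set rs) (set cs) X" for X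
      unfolding minor_def sr c by simp
    have idx: "(set rs, set cs) \<in> minor_idx" unfolding minor_idx_def using False c by simp
    show ?thesis unfolding e det_leib m using lagr_minor[OF idx] by simp
  qed
qed

lemma mix_lagr:
  "sorted rs \<Longrightarrow> distinct rs \<Longrightarrow> sorted cs \<Longrightarrow> distinct cs \<Longrightarrow> length cs = length rs
   \<Longrightarrow> (\<lambda>X. Determinant.det (mixmat rs cs R C X)) \<in> lagr"
proof (induction "length rs + card (R \<inter> set rs)" arbitrary: rs cs R rule: less_induct)
  case less
  show ?case
  proof (cases "R \<inter> set rs = {}")
    case True
    then show ?thesis using mix_base less.prems by blast
  next
    case False
    then obtain r where r: "r \<in> R" "r \<in> set rs" by blast
    then obtain i where i: "i < length rs" "rs ! i = r" by (metis in_set_conv_nth)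
    let ?k = "length rs"
    let ?R' = "R - {r}"
    have card_lt: "card (?R' \<inter> set rs) < card (R \<inter> set rs)"
      using r by (intro psubset_card_mono) auto
    have IH1: "(\<lambda>X. Determinant.det (mixmat rs cs ?R' C X)) \<in> lagr"
      using less.hyps[of rs ?R' cs] less.prems card_lt by simp
    have IH2: "(\<lambda>X. Determinant.det (mixmat (del i rs) (del j cs) R C X)) \<in> lagr" if j: "j < ?k" for j
    proof -
      have lr: "length (del i rs) = ?k - 1" "length (del j cs) = ?k - 1"
        using i j less.prems(5) by (auto simp: length_del)
      have "card (R \<inter> set (del i rs)) \<le> card (R \<inter> set rs)"
        using set_del[of i rs] by (intro card_mono) auto
      then have "length (del i rs) + card (R \<inter> set (del i rs)) < length rs + card (R \<inter> set rs)"
        using lr i by linarith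
      then show ?thesis using less.hyps[of "del i rs" R "del j cs"] less.prems lr
        by (simp add: sorted_del distinct_del)
    qed
    have dm: "mat_delete (mixmat rs cs ?R' C X) i j = mat_delete (mixmat rs cs R C X) i j" if j: "j < ?k" for j X
    proof -
      have "mixmat (del i rs) (del j cs) ?R' C X = mixmat (del i rs) (del j cs) R C X"
        using notin_del[OF less.prems(2) i(1)] i(2) by (intro mixmat_cong) auto
      then show ?thesis using mixmat_delete[OF i(1) j less.prems(5)] by simp
    qed
    have ent: "mixmat rs cs R C X $$ (i, j) = mixmat rs cs ?R' C X $$ (i, j) + C r (cs ! j)" if j: "j < ?k" for j X
      unfolding mixmat_def using i j r by simp
    have eq: "Determinant.det (mixmat rs cs R C X) = Determinant.det (mixmat rs cs ?R' C X)
        + (\<Sum>j<?k. (C r (cs ! j) * (-1)^(i+j)) * Determinant.det (mixmat (del i rs) (del j cs) R C X))" for X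
    proof -
      have "Determinant.det (mixmat rs cs R C X) = (\<Sum>j<?k. mixmat rs cs R C X $$ (i,j) * cofactor (mixmat rs cs R C X) i j)"
        by (rule laplace_expansion_row[OF mixmat_carrier i(1)])
      also have "\<dots> = (\<Sum>j<?k. mixmat rs cs ?R' C X $$ (i,j) * cofactor (mixmat rs cs ?R' C X) i j)
          + (\<Sum>j<?k. C r (cs ! j) * cofactor (mixmat rs cs R C X) i j)"
        unfolding sum.distrib[symmetric]
        by (rule sum.cong) (auto simp: ent dm cofactor_def distrib_right)
      also have "(\<Sum>j<?k. mixmat rs cs ?R' C X $$ (i,j) * cofactor (mixmat rs cs ?R' C X) i j)
          = Determinant.det (mixmat rs cs ?R' C X)"
        by (rule laplace_expansion_row[OF mixmat_carrier i(1), symmetric])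
      also have "(\<Sum>j<?k. C r (cs ! j) * cofactor (mixmat rs cs R C X) i j)
          = (\<Sum>j<?k. (C r (cs ! j) * (-1)^(i+j)) * Determinant.det (mixmat (del i rs) (del j cs) R C X))"
        by (rule sum.cong) (auto simp: cofactor_def mixmat_delete[OF i(1) _ less.prems(5)])
      finally show ?thesis .
    qed
    show ?thesis unfolding eq
      by (intro lagr_add IH1 lagr_sum lagr_scale IH2) auto
  qed
qed

lemma minor_shift_lagr:
  assumes "(I, J) \<in> minor_idx"
  shows "(\<lambda>X. minor I J (X + A)) \<in> lagr"
proof -
  let ?rs = "sorted_list_of_set I" and ?cs = "sorted_list_of_set J"
  have fin: "finite I" "finite J" by auto
  have cIJ: "card J = card I" using assms unfolding minor_idx_def by auto
  have l: "length ?rs = card I" "length ?cs = card I" using cIJ by simp_all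
  have "minor I J (X + A) = Determinant.det (mixmat ?rs ?cs UNIV (\<lambda>i j. A $ i $ j) X)" for X
    unfolding mixmat_def l minor_def by (subst det_leib[symmetric]) (intro arg_cong[where f = Determinant.det] cong_mat, auto)
  moreover have "(\<lambda>X. Determinant.det (mixmat ?rs ?cs UNIV (\<lambda>i j. A $ i $ j) X)) \<in> lagr"
    by (rule mix_lagr) (simp_all add: l cIJ)
  ultimately show ?thesis by simp
qed

lemma minor_scale: "minor I J (c *\<^sub>R X) = c ^ card I * minor I J X"
  unfolding minor_def leibniz_det_def
  by (simp add: sum_distrib_left prod.distrib mult.left_commute)

lemma minor_single: "minor {i} {j} X = X $ i $ j"
proof -
  have "{..<Suc 0} = {0::nat}" by auto
  then have "{p. p permutes {..<Suc 0}} = {id :: nat \<Rightarrow> nat}" by simp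
  then show ?thesis unfolding minor_def leibniz_det_def by simp
qed

lemma single_idx: "({i}, {j}) \<in> minor_idx"
  unfolding minor_idx_def by simp

lemma minor_zero: "(I, J) \<in> minor_idx \<Longrightarrow> minor I J 0 = 0"
proof -
  assume "(I, J) \<in> minor_idx"
  then have "I \<noteq> {}" unfolding minor_idx_def by auto
  then have "card I > 0" by (simp add: card_gt_0_iff)
  then show ?thesis unfolding minor_def leibniz_det_def
    by (intro sum.neutral) (auto intro!: prod_zero)
qed

lemma minor_comb_zero: "minor_comb \<beta> \<gamma> 0 = 0"
  unfolding minor_comb_def by (auto intro!: sum.neutral simp: minor_zero)

lemma comb_shift_lagr: "(\<lambda>X. minor_comb \<beta> \<gamma> (t *\<^sub>R (X + A))) \<in> lagr"
proof -
  have e: "minor_comb \<beta> \<gamma> (t *\<^sub>R (X + A)) =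
     (\<Sum>IJ\<in>minor_idx. (\<beta> IJ * t ^ card (fst IJ)) * minor (fst IJ) (snd IJ) (X + A))
     + (\<Sum>i\<in>UNIV. \<Sum>j\<in>UNIV. (\<gamma> (i, j) * t) * minor {i} {j} (X + A))" for X
    unfolding minor_comb_def minor_scale minor_single by (simp add: mult.assoc)
  show ?thesis unfolding e
    by (intro lagr_add lagr_sum lagr_scale minor_shift_lagr single_idx finite_minor_idx finite) auto
qed

lemma poly_cmult: "p \<in> poly_fun \<Longrightarrow> (\<lambda>x. c * p x) \<in> poly_fun"
  by (rule poly_fun.mult[OF poly_fun.const])

lemma poly_sum: "finite S \<Longrightarrow> (\<And>s. s \<in> S \<Longrightarrow> f s \<in> poly_fun) \<Longrightarrow> (\<lambda>x. \<Sum>s\<in>S. f s x) \<in> poly_fun"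
proof (induction S rule: finite_induct)
  case empty then show ?case using poly_fun.const[of 0] by simp
next
  case (insert a F) then show ?case using poly_fun.add[of "f a" "\<lambda>x. \<Sum>s\<in>F. f s x"] by simp
qed

lemma poly_prod: "finite S \<Longrightarrow> (\<And>s. s \<in> S \<Longrightarrow> f s \<in> poly_fun) \<Longrightarrow> (\<lambda>x. \<Prod>s\<in>S. f s x) \<in> poly_fun"
proof (induction S rule: finite_induct)
  case empty then show ?case using poly_fun.const[of 1] by simp
next
  case (insert a F) then show ?case using poly_fun.mult[of "f a" "\<lambda>x. \<Prod>s\<in>F. f s x"] by simp
qed

lemma poly_scale: "p \<in> poly_fun \<Longrightarrow> (\<lambda>x. p (c *\<^sub>R x)) \<in> poly_fun"
proof (induction rule: poly_fun.induct)
  case (const c) then show ?case by (rule poly_fun.const)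
next
  case (coord b) then show ?case using poly_cmult[OF poly_fun.coord[OF coord], of c] by simp
next
  case (add p q) then show ?case using poly_fun.add[of "\<lambda>x. p (c *\<^sub>R x)" "\<lambda>x. q (c *\<^sub>R x)"] by simp
next
  case (mult p q) then show ?case using poly_fun.mult[of "\<lambda>x. p (c *\<^sub>R x)" "\<lambda>x. q (c *\<^sub>R x)"] by simp
qed

lemma poly_cont: "p \<in> poly_fun \<Longrightarrow> continuous_on UNIV p"
proof (induction rule: poly_fun.induct)
  case (const c) then show ?case by (rule continuous_on_const)
next
  case (coord b) then show ?case by (intro continuous_on_inner continuous_on_id continuous_on_const)
next
  case (add p q) show ?case by (rule continuous_on_add[OF add.IH])
next
  case (mult p q) show ?case by (rule continuous_on_mult[OF mult.IH])
qed

lemma poly_inner: "(\<lambda>y. z \<bullet> y) \<in> poly_fun"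
proof -
  have 1: "(\<lambda>y. \<Sum>b\<in>Basis. (z \<bullet> b) * (y \<bullet> b)) \<in> poly_fun"
    by (rule poly_sum, simp, rule poly_cmult, rule poly_fun.coord, assumption)
  have e: "\<And>y. (\<Sum>b\<in>Basis. (z \<bullet> b) * (y \<bullet> b)) = z \<bullet> y"
    by (rule euclidean_inner[symmetric])
  show ?thesis using 1 by (simp only: e)
qed

lemma poly_entry: "(\<lambda>X::real^('n::finite)^('m::finite). X $ i $ j) \<in> poly_fun"
proof -
  have b: "axis i (axis j (1::real)) \<in> (Basis :: (real^'n^'m) set)"
    by (simp add: axis_in_Basis_iff)
  have "(\<lambda>X::real^'n^'m. X \<bullet> axis i (axis j 1)) \<in> poly_fun" by (rule poly_fun.coord[OF b])
  moreover have "X \<bullet> axis i (axis j 1) = X $ i $ j" for X :: "real^'n^'m"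
    by (simp add: inner_axis)
  ultimately show ?thesis by simp
qed

lemma poly_minor: "minor I J \<in> poly_fun"
proof -
  let ?rs = "sorted_list_of_set I" and ?cs = "sorted_list_of_set J" and ?k = "card I"
  have "(\<lambda>X. \<Sum>p\<in>{p. p permutes {..<?k}}. of_int (sign p) * (\<Prod>i<?k. X $ (?rs ! i) $ (?cs ! (p i)))) \<in> poly_fun"
  proof (rule poly_sum)
    show "finite {p. p permutes {..<?k}}" by (simp add: finite_permutations)
  next
    fix p
    show "(\<lambda>X. of_int (sign p) * (\<Prod>i<?k. X $ (?rs ! i) $ (?cs ! (p i)))) \<in> poly_fun"
      by (rule poly_cmult, rule poly_prod) (simp_all add: poly_entry)
  qed
  then show ?thesis unfolding minor_def[abs_def] leibniz_det_def by simp
qed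

lemma poly_comb:
  fixes \<gamma> :: "('m::{finite,linorder}) \<times> ('n::{finite,linorder}) \<Rightarrow> real"
  shows "minor_comb \<beta> \<gamma> \<in> poly_fun"
proof -
  have 1: "(\<lambda>X. \<Sum>IJ\<in>minor_idx. \<beta> IJ * minor (fst IJ) (snd IJ) X) \<in> poly_fun"
    by (rule poly_sum[OF finite_minor_idx], rule poly_cmult) (simp add: poly_minor)
  have 2: "(\<lambda>X::real^('n::{finite,linorder})^('m::{finite,linorder}). \<Sum>i\<in>UNIV. \<Sum>j\<in>UNIV. \<gamma> (i, j) * X $ i $ j) \<in> poly_fun"
    by (rule poly_sum, simp, rule poly_sum, simp, rule poly_cmult, rule poly_entry)
  show ?thesis unfolding minor_comb_def[abs_def] using poly_fun.add[OF 1 2] by simp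
qed

lemma supp_AE:
  fixes \<nu> :: "'a::euclidean_space measure"
  assumes s: "sets \<nu> = sets borel"
  shows "AE x in \<nu>. x \<in> msupport \<nu>"
proof -
  let ?F = "{ball x e | x e. e > 0 \<and> emeasure \<nu> (ball x e) = 0}"
  have op: "\<And>S. S \<in> ?F \<Longrightarrow> open S" by auto
  obtain F' where F': "F' \<subseteq> ?F" "countable F'" "\<Union>F' = \<Union>?F"
    by (rule Lindelof[of ?F, OF op])
  have "\<Union>(id ` F') \<in> null_sets \<nu>"
  proof (rule null_sets_UN')
    show "countable F'" by (rule F'(2))
  next
    fix S assume "S \<in> F'"
    then obtain x e where "S = ball x e" "emeasure \<nu> (ball x e) = 0" using F'(1) by blast
    moreover have "ball x e \<in> sets \<nu>" using s by simp
    ultimately show "id S \<in> null_sets \<nu>" by (simp add: null_setsI)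
  qed
  then have N: "\<Union>F' \<in> null_sets \<nu>" by simp
  show ?thesis
  proof (rule AE_I'[OF N])
    show "{x \<in> space \<nu>. x \<notin> msupport \<nu>} \<subseteq> \<Union>F'"
    proof
      fix x assume "x \<in> {x \<in> space \<nu>. x \<notin> msupport \<nu>}"
      then obtain e where "e > 0" "emeasure \<nu> (ball x e) = 0" unfolding msupport_def by auto
      then have "ball x e \<in> ?F" by blast
      moreover have "x \<in> ball x e" using \<open>e > 0\<close> by simp
      ultimately show "x \<in> \<Union>F'" using F'(3) by blast
    qed
  qed
qed

lemma supp_dirac:
  fixes \<nu> :: "'a::euclidean_space measure"
  assumes p: "prob_space \<nu>" and s: "sets \<nu> = sets borel" and sub: "msupport \<nu> \<subseteq> {a}"
  shows "\<nu> = return borel a"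
proof (rule measure_eqI)
  show "sets \<nu> = sets (return borel a)" using s by simp
next
  fix A assume A: "A \<in> sets \<nu>"
  have ae: "AE x in \<nu>. x = a" using supp_AE[OF s] by eventually_elim (use sub in auto)
  have Ab: "A \<in> sets borel" using A s by simp
  show "emeasure \<nu> A = emeasure (return borel a) A"
  proof (cases "a \<in> A")
    case True
    have "AE x in \<nu>. x \<in> A" using ae by eventually_elim (use True in auto)
    then have "emeasure \<nu> A = 1" using prob_space.emeasure_eq_1_AE[OF p A] by simp
    then show ?thesis using True Ab by simp
  next
    case False
    have "AE x in \<nu>. x \<notin> A" using ae by eventually_elim (use False in auto)
    then have "A \<in> null_sets \<nu>" using AE_iff_null_sets[OF A] by simp
    then show ?thesis using False Ab by (simp add: null_setsD1)
  qed
qed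

lemma in_subspace_orth:
  fixes K :: "'a::euclidean_space set"
  assumes K: "subspace K" and h: "\<And>z. (\<forall>k\<in>K. z \<bullet> k = 0) \<Longrightarrow> z \<bullet> x = 0"
  shows "x \<in> K"
proof -
  obtain y z where y: "y \<in> span K" and z: "\<And>w. w \<in> span K \<Longrightarrow> real_inner_class.orthogonal z w" and xyz: "x = y + z"
    by (rule orthogonal_subspace_decomp_exists[of K x]) blast
  have sK: "span K = K" using K by (simp add: span_eq_iff)
  have "\<forall>k\<in>K. z \<bullet> k = 0" using z sK by (auto simp: real_inner_class.orthogonal_def)
  then have "z \<bullet> x = 0" by (rule h)
  moreover have "z \<bullet> y = 0" using z y by (simp add: real_inner_class.orthogonal_def)
  moreover have "z \<bullet> x = z \<bullet> y + z \<bullet> z" unfolding xyz by (rule inner_add_right)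
  ultimately have "z \<bullet> z = 0" by linarith
  then have "z = 0" by (rule iffD1[OF inner_eq_zero_iff])
  then have "x = y" using xyz by simp
  then show ?thesis using y sK by simp
qed

lemma supp_zero:
  fixes \<nu> :: "'a::euclidean_space measure"
  assumes s: "sets \<nu> = sets borel" and g: "continuous_on UNIV g" and ae: "AE x in \<nu>. g x = (0::real)"
    and x: "x \<in> msupport \<nu>"
  shows "g x = 0"
proof (rule ccontr)
  assume gx: "g x \<noteq> 0"
  have "open {y. g y \<noteq> 0}" using g by (intro open_Collect_neq) (auto intro: continuous_on_const)
  then obtain e where e: "e > 0" "ball x e \<subseteq> {y. g y \<noteq> 0}" using gx by (auto simp: open_contains_ball)
  have "emeasure \<nu> (ball x e) \<noteq> 0" using x e unfolding msupport_def by auto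
  moreover have "ball x e \<in> null_sets \<nu>"
  proof -
    have "AE y in \<nu>. y \<notin> ball x e" using ae by eventually_elim (use e in auto)
    then show ?thesis using AE_iff_null_sets[of "ball x e" \<nu>] s by simp
  qed
  ultimately show False by auto
qed

lemma lagr_int:
  fixes K :: "(real^('n::{finite,linorder})^('m::{finite,linorder})) set"
  assumes nu: "\<nu> \<in> pc_measures K" and f: "f \<in> lagr"
  shows "integrable \<nu> f \<and> integral\<^sup>L \<nu> f = f (\<integral>X. X \<partial>\<nu>)"
proof -
  have p: "prob_space \<nu>" using nu unfolding pc_measures_def by blast
  interpret prob_space \<nu> by (rule p)
  have mi: "integrable \<nu> (minor I J) \<and> integral\<^sup>L \<nu> (minor I J) = minor I J (\<integral>X. X \<partial>\<nu>)"
    if "(I, J) \<in> minor_idx" for I :: "'m set" and J :: "'n set"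
    using nu that unfolding pc_measures_def by blast
  obtain c0 c where fe: "\<forall>X. f X = c0 + (\<Sum>IJ\<in>minor_idx. c IJ * minor (fst IJ) (snd IJ) X)"
    using f unfolding lagr_def by blast
  have fd: "f = (\<lambda>X. c0 + (\<Sum>IJ\<in>minor_idx. c IJ * minor (fst IJ) (snd IJ) X))"
    using fe by (intro ext) simp
  have ie: "integrable \<nu> (\<lambda>X. c IJ * minor (fst IJ) (snd IJ) X)" if "IJ \<in> minor_idx" for IJ :: "'m set \<times> 'n set"
  proof -
    have "integrable \<nu> (minor (fst IJ) (snd IJ))" using mi[of "fst IJ" "snd IJ"] that by simp
    then show ?thesis by (rule integrable_mult_right)
  qed
  have isum: "integrable \<nu> (\<lambda>X. \<Sum>IJ\<in>minor_idx. c IJ * minor (fst IJ) (snd IJ) X)"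
    by (rule Bochner_Integration.integrable_sum) (rule ie)
  have ic: "integrable \<nu> (\<lambda>X. c0)" by (rule integrable_const)
  have "integrable \<nu> f" unfolding fd by (rule Bochner_Integration.integrable_add[OF ic isum])
  moreover have "integral\<^sup>L \<nu> f = f (\<integral>X. X \<partial>\<nu>)"
  proof -
    have "integral\<^sup>L \<nu> f = integral\<^sup>L \<nu> (\<lambda>X. c0) + integral\<^sup>L \<nu> (\<lambda>X. \<Sum>IJ\<in>minor_idx. c IJ * minor (fst IJ) (snd IJ) X)"
      unfolding fd by (rule Bochner_Integration.integral_add[OF ic isum])
    also have "integral\<^sup>L \<nu> (\<lambda>X. c0) = c0" using prob_space by simp
    also have "integral\<^sup>L \<nu> (\<lambda>X. \<Sum>IJ\<in>minor_idx. c IJ * minor (fst IJ) (snd IJ) X)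
        = (\<Sum>IJ\<in>minor_idx. integral\<^sup>L \<nu> (\<lambda>X. c IJ * minor (fst IJ) (snd IJ) X))"
      by (rule Bochner_Integration.integral_sum) (rule ie)
    also have "\<dots> = (\<Sum>IJ\<in>minor_idx. c IJ * minor (fst IJ) (snd IJ) (\<integral>X. X \<partial>\<nu>))"
    proof (rule sum.cong[OF refl])
      fix IJ :: "'m set \<times> 'n set" assume IJ: "IJ \<in> minor_idx"
      have m: "integrable \<nu> (minor (fst IJ) (snd IJ))"
        "integral\<^sup>L \<nu> (minor (fst IJ) (snd IJ)) = minor (fst IJ) (snd IJ) (\<integral>X. X \<partial>\<nu>)"
        using mi[of "fst IJ" "snd IJ"] IJ by simp_all
      show "integral\<^sup>L \<nu> (\<lambda>X. c IJ * minor (fst IJ) (snd IJ) X) = c IJ * minor (fst IJ) (snd IJ) (\<integral>X. X \<partial>\<nu>)"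
        using Bochner_Integration.integral_mult_right[of "c IJ" \<nu> "minor (fst IJ) (snd IJ)"] m by simp
    qed
    finally show ?thesis using fd by simp
  qed
  ultimately show ?thesis by blast
qed

lemma mean_in_K:
  assumes K: "subspace K" and nu: "\<nu> \<in> pc_measures K"
  shows "(\<integral>X. X \<partial>\<nu>) \<in> K"
proof (rule in_subspace_orth[OF K])
  have s: "sets \<nu> = sets borel" and sK: "msupport \<nu> \<subseteq> K" and ii: "integrable \<nu> (\<lambda>X. X)"
    using nu unfolding pc_measures_def by blast+
  fix z assume z: "\<forall>k\<in>K. z \<bullet> k = 0"
  have "(\<integral>X. z \<bullet> X \<partial>\<nu>) = z \<bullet> (\<integral>X. X \<partial>\<nu>)"
    by (rule integral_inner_right) (rule ii)
  moreover have "(\<integral>X. z \<bullet> X \<partial>\<nu>) = 0"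
  proof (rule integral_eq_zero_AE)
    show "AE X in \<nu>. z \<bullet> X = 0" using supp_AE[OF s] by eventually_elim (use sK z in blast)
  qed
  ultimately show "z \<bullet> (\<integral>X. X \<partial>\<nu>) = 0" by simp
qed

lemma dir2:
  fixes K :: "(real^('n::{finite,linorder})^('m::{finite,linorder})) set"
  assumes K: "subspace K"
   and H: "\<forall>V. algebraic_cone V \<and> V \<subseteq> K \<and> V \<noteq> {} \<and> V \<noteq> {0} \<longrightarrow>
       (\<exists>\<beta> \<gamma>. ((\<exists>IJ\<in>minor_idx. \<beta> IJ \<noteq> 0) \<or> (\<exists>ij. \<gamma> ij \<noteq> 0)) \<and>
          (\<forall>\<zeta>\<in>V. minor_comb \<beta> \<gamma> \<zeta> \<ge> 0) \<and>
          (\<exists>\<zeta>\<in>V. minor_comb \<beta> \<gamma> \<zeta> \<noteq> 0))"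
   and nu: "\<nu> \<in> pc_measures K"
  shows "\<exists>x. \<nu> = return borel x"
proof -
  have p: "prob_space \<nu>" and s: "sets \<nu> = sets borel" and supK: "msupport \<nu> \<subseteq> K"
    using nu unfolding pc_measures_def by blast+
  define A where "A = (\<integral>X. X \<partial>\<nu>)"
  have AK: "A \<in> K" unfolding A_def by (rule mean_in_K[OF K nu])
  show ?thesis
  proof (cases "msupport \<nu> \<subseteq> {A}")
    case True then show ?thesis using supp_dirac[OF p s] by blast
  next
    case False
    then obtain x0 where x0: "x0 \<in> msupport \<nu>" "x0 \<noteq> A" by blast
    define C0 where "C0 = {t *\<^sub>R (x - A) | t x. t > 0 \<and> x \<in> msupport \<nu>}"
    define P where "P = {q \<in> poly_fun. \<forall>z\<in>C0. q z = 0}"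
    define V where "V = {\<zeta>. \<forall>q\<in>P. q \<zeta> = 0}"
    have C0mem: "t *\<^sub>R (x - A) \<in> C0" if "t > 0" "x \<in> msupport \<nu>" for t x
      unfolding C0_def using that by (intro CollectI exI[of _ t] exI[of _ x] conjI refl)
    have C0V: "C0 \<subseteq> V" unfolding V_def P_def by blast
    have C0K: "C0 \<subseteq> K"
    proof
      fix z assume "z \<in> C0"
      then obtain t x where z: "z = t *\<^sub>R (x - A)" "x \<in> msupport \<nu>" unfolding C0_def by blast
      have "x \<in> K" using z(2) supK by blast
      then have "x - A \<in> K" using AK by (rule subspace_diff[OF K])
      then show "z \<in> K" unfolding z(1) by (rule subspace_scale[OF K])
    qed
    have Pscale: "(\<lambda>x. q (c *\<^sub>R x)) \<in> P" if q: "q \<in> P" and c: "c > 0" for q and c :: real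
    proof -
      have qp: "q \<in> poly_fun" and qz: "\<And>z. z \<in> C0 \<Longrightarrow> q z = 0" using q unfolding P_def by auto
      have 1: "(\<lambda>x. q (c *\<^sub>R x)) \<in> poly_fun" by (rule poly_scale[OF qp])
      have 2: "q (c *\<^sub>R z) = 0" if z0: "z \<in> C0" for z
      proof -
        obtain t x where z: "z = t *\<^sub>R (x - A)" "t > 0" "x \<in> msupport \<nu>" using z0 unfolding C0_def by blast
        have e: "c *\<^sub>R z = (c * t) *\<^sub>R (x - A)" unfolding z(1) by simp
        have "c * t > 0" using c z(2) by simp
        then have "(c * t) *\<^sub>R (x - A) \<in> C0" by (rule C0mem[OF _ z(3)])
        then have "c *\<^sub>R z \<in> C0" unfolding e .
        then show ?thesis by (rule qz)
      qed
      show ?thesis unfolding P_def using 1 2 by simp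
    qed
    have cone: "is_cone V"
      unfolding is_cone_def
    proof (intro ballI allI impI)
      fix \<zeta> and c :: real assume \<zeta>: "\<zeta> \<in> V" and c: "c > 0"
      have allP: "\<forall>p\<in>P. p \<zeta> = 0" using \<zeta> unfolding V_def by simp
      have "q (c *\<^sub>R \<zeta>) = 0" if q: "q \<in> P" for q
      proof -
        have "(\<lambda>x. q (c *\<^sub>R x)) \<zeta> = 0" using allP Pscale[OF q c] by (rule bspec)
        then show ?thesis by simp
      qed
      then show "c *\<^sub>R \<zeta> \<in> V" unfolding V_def by simp
    qed
    have alg: "algebraic_set V" unfolding algebraic_set_def
    proof (rule exI[of _ P], rule conjI)
      show "P \<subseteq> poly_fun" unfolding P_def by blast
      show "V = {x. \<forall>p\<in>P. p x = 0}" unfolding V_def by blast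
    qed
    have VK: "V \<subseteq> K"
    proof
      fix \<zeta> assume \<zeta>: "\<zeta> \<in> V"
      show "\<zeta> \<in> K"
      proof (rule in_subspace_orth[OF K])
        fix z assume z: "\<forall>k\<in>K. z \<bullet> k = 0"
        have "(\<lambda>y. z \<bullet> y) \<in> P" unfolding P_def using poly_inner[of z] C0K z by blast
        then show "z \<bullet> \<zeta> = 0" using \<zeta> unfolding V_def by blast
      qed
    qed
    have "1 *\<^sub>R (x0 - A) \<in> C0" using C0mem[OF _ x0(1), of 1] by simp
    then have d0: "x0 - A \<in> C0" by simp
    then have d0V: "x0 - A \<in> V" using C0V by blast
    have ne1: "V \<noteq> {}" using d0V by blast
    have ne2: "V \<noteq> {0}"
    proof
      assume "V = {0}"
      then have "x0 - A = 0" using d0V by blast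
      then show False using x0(2) by simp
    qed
    have ac: "algebraic_cone V" unfolding algebraic_cone_def using cone alg by blast
    obtain \<beta> \<gamma> where ge: "\<forall>\<zeta>\<in>V. minor_comb \<beta> \<gamma> \<zeta> \<ge> 0" and ne: "\<exists>\<zeta>\<in>V. minor_comb \<beta> \<gamma> \<zeta> \<noteq> 0"
      using H[rule_format, OF conjI[OF ac conjI[OF VK conjI[OF ne1 ne2]]]] by blast
    have "minor_comb \<beta> \<gamma> \<in> P"
      unfolding P_def
    proof (intro CollectI conjI ballI)
      show "minor_comb \<beta> \<gamma> \<in> poly_fun" by (rule poly_comb)
      fix z assume "z \<in> C0"
      then obtain t x where z: "z = t *\<^sub>R (x - A)" "t > 0" "x \<in> msupport \<nu>" unfolding C0_def by blast
      define g where "g = (\<lambda>X. minor_comb \<beta> \<gamma> (t *\<^sub>R (X + (- A))))"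
      have gl: "g \<in> lagr" unfolding g_def by (rule comb_shift_lagr)
      have gi: "integrable \<nu> g" "integral\<^sup>L \<nu> g = g A" using lagr_int[OF nu gl] unfolding A_def by blast+
      have g0: "g A = 0" unfolding g_def by (simp add: minor_comb_zero)
      have gnn: "AE X in \<nu>. 0 \<le> g X" using supp_AE[OF s]
      proof eventually_elim
        fix X assume "X \<in> msupport \<nu>"
        then have "t *\<^sub>R (X - A) \<in> C0" using C0mem[OF z(2)] by blast
        then have "minor_comb \<beta> \<gamma> (t *\<^sub>R (X - A)) \<ge> 0" using ge C0V by blast
        then show "0 \<le> g X" unfolding g_def by simp
      qed
      have "AE X in \<nu>. g X = 0" using integral_nonneg_eq_0_iff_AE[OF gi(1) gnn] gi(2) g0 by simp
      moreover have "continuous_on UNIV g" unfolding g_def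
      proof (rule continuous_on_compose2[OF poly_cont[OF poly_comb]])
        show "continuous_on UNIV (\<lambda>X. t *\<^sub>R (X + - A))"
          by (intro continuous_on_scaleR continuous_on_add continuous_on_id continuous_on_const)
      qed simp
      ultimately have "g x = 0" using supp_zero[OF s _ _ z(3)] by blast
      then show "minor_comb \<beta> \<gamma> z = 0" unfolding g_def z(1) by simp
    qed
    then show ?thesis using ne unfolding V_def by blast
  qed
qed

definition Phi :: "real^('n::{finite,linorder})^('m::{finite,linorder}) \<Rightarrow> real^(('m set \<times> 'n set) + ('m \<times> 'n))" where
  "Phi X = (\<chi> k. case k of Inl IJ \<Rightarrow> (if IJ \<in> minor_idx then minor (fst IJ) (snd IJ) X else 0)
                          | Inr ij \<Rightarrow> X $ fst ij $ snd ij)"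

lemma Phi_Inl: "Phi X $ Inl IJ = (if IJ \<in> minor_idx then minor (fst IJ) (snd IJ) X else 0)"
  unfolding Phi_def by simp

lemma Phi_Inr: "Phi X $ Inr (i, j) = X $ i $ j"
  unfolding Phi_def by simp

lemma Phi_inner: "a \<bullet> Phi X = minor_comb (\<lambda>IJ. a $ Inl IJ) (\<lambda>ij. a $ Inr ij) X"
proof -
  have "a \<bullet> Phi X = (\<Sum>k\<in>UNIV. a $ k * Phi X $ k)" unfolding inner_vec_def by simp
  also have "\<dots> = (\<Sum>k\<in>UNIV <+> UNIV. a $ k * Phi X $ k)" by (simp only: UNIV_Plus_UNIV)
  also have "\<dots> = (\<Sum>IJ\<in>UNIV. a $ Inl IJ * Phi X $ Inl IJ) + (\<Sum>ij\<in>UNIV. a $ Inr ij * Phi X $ Inr ij)"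
    by (subst sum.Plus) (simp_all add: comp_def)
  also have "(\<Sum>IJ\<in>UNIV. a $ Inl IJ * Phi X $ Inl IJ) = (\<Sum>IJ\<in>minor_idx. a $ Inl IJ * minor (fst IJ) (snd IJ) X)"
  proof -
    have "(\<Sum>IJ\<in>UNIV. a $ Inl IJ * Phi X $ Inl IJ) = (\<Sum>IJ\<in>UNIV. if IJ \<in> minor_idx then a $ Inl IJ * minor (fst IJ) (snd IJ) X else 0)"
      by (rule sum.cong) (simp_all add: Phi_Inl)
    also have "\<dots> = (\<Sum>IJ\<in>UNIV \<inter> minor_idx. a $ Inl IJ * minor (fst IJ) (snd IJ) X)"
      by (rule sum.inter_restrict[symmetric]) simp
    finally show ?thesis by simp
  qed
  also have "(\<Sum>ij\<in>UNIV. a $ Inr ij * Phi X $ Inr ij) = (\<Sum>i\<in>UNIV. \<Sum>j\<in>UNIV. a $ Inr (i, j) * X $ i $ j)"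
  proof -
    have "(\<Sum>ij\<in>UNIV. a $ Inr ij * Phi X $ Inr ij) = (\<Sum>ij\<in>UNIV \<times> UNIV. a $ Inr ij * Phi X $ Inr ij)"
      by (simp only: UNIV_Times_UNIV)
    also have "\<dots> = (\<Sum>(i,j)\<in>UNIV \<times> UNIV. a $ Inr (i, j) * Phi X $ Inr (i, j))"
      by (rule sum.cong) auto
    also have "\<dots> = (\<Sum>i\<in>UNIV. \<Sum>j\<in>UNIV. a $ Inr (i, j) * Phi X $ Inr (i, j))"
      by (rule sum.cartesian_product[symmetric])
    finally show ?thesis by (simp add: Phi_Inr)
  qed
  finally show ?thesis unfolding minor_comb_def by simp
qed

lemma Phi_zero: "Phi (0::real^('n::{finite,linorder})^('m::{finite,linorder})) = 0"
proof (rule Finite_Cartesian_Product.vec_eq_iff[THEN iffD2], rule allI)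
  fix k :: "('m set \<times> 'n set) + ('m \<times> 'n)"
  show "Phi (0::real^('n::{finite,linorder})^('m::{finite,linorder})) $ k = 0 $ k"
  proof (cases k)
    case (Inl IJ) then show ?thesis by (cases IJ) (simp add: Phi_Inl minor_zero)
  next
    case (Inr ij) then show ?thesis by (cases ij) (simp add: Phi_Inr)
  qed
qed

lemma Phi_eq0: "Phi X = 0 \<Longrightarrow> X = 0"
proof -
  assume "Phi X = 0"
  then have e: "X $ i $ j = 0" for i j using Phi_Inr[of X i j] by simp
  have "X $ i = 0" for i using e by (simp add: Finite_Cartesian_Product.vec_eq_iff)
  then show "X = 0" by (simp add: Finite_Cartesian_Product.vec_eq_iff)
qed

lemma Hprime:
  fixes V :: "(real^('n::{finite,linorder})^('m::{finite,linorder})) set"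
  assumes N: "\<not> (\<exists>\<beta> \<gamma>. ((\<exists>IJ\<in>minor_idx. \<beta> IJ \<noteq> 0) \<or> (\<exists>ij. \<gamma> ij \<noteq> 0)) \<and>
          (\<forall>\<zeta>\<in>V. minor_comb \<beta> \<gamma> \<zeta> \<ge> 0) \<and> (\<exists>\<zeta>\<in>V. minor_comb \<beta> \<gamma> \<zeta> \<noteq> 0))"
   and nn: "\<forall>\<zeta>\<in>V. a \<bullet> Phi \<zeta> \<ge> 0"
  shows "\<forall>\<zeta>\<in>V. a \<bullet> Phi \<zeta> = 0"
proof (cases "(\<exists>IJ\<in>minor_idx. a $ Inl IJ \<noteq> 0) \<or> (\<exists>ij. a $ Inr ij \<noteq> 0)")
  case True
  have nn': "\<forall>\<zeta>\<in>V. minor_comb (\<lambda>IJ. a $ Inl IJ) (\<lambda>ij. a $ Inr ij) \<zeta> \<ge> 0"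
    using nn by (simp add: Phi_inner)
  have N': "\<not> (((\<exists>IJ\<in>minor_idx. a $ Inl IJ \<noteq> 0) \<or> (\<exists>ij. a $ Inr ij \<noteq> 0)) \<and>
          (\<forall>\<zeta>\<in>V. minor_comb (\<lambda>IJ. a $ Inl IJ) (\<lambda>ij. a $ Inr ij) \<zeta> \<ge> 0) \<and>
          (\<exists>\<zeta>\<in>V. minor_comb (\<lambda>IJ. a $ Inl IJ) (\<lambda>ij. a $ Inr ij) \<zeta> \<noteq> 0))"
    using N by (rule contrapos_nn) (rule exI, rule exI, assumption)
  have "\<not> (\<exists>\<zeta>\<in>V. minor_comb (\<lambda>IJ. a $ Inl IJ) (\<lambda>ij. a $ Inr ij) \<zeta> \<noteq> 0)"
    using N' True nn' by blast
  then show ?thesis by (simp add: Phi_inner)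
next
  case False
  then have z1: "\<And>IJ. IJ \<in> minor_idx \<Longrightarrow> a $ Inl IJ = 0" and z2: "\<And>ij. a $ Inr ij = 0" by auto
  show ?thesis
  proof
    fix \<zeta> assume "\<zeta> \<in> V"
    have "minor_comb (\<lambda>IJ. a $ Inl IJ) (\<lambda>ij. a $ Inr ij) \<zeta> = 0"
      unfolding minor_comb_def using z1 z2 by simp
    then show "a \<bullet> Phi \<zeta> = 0" by (simp add: Phi_inner)
  qed
qed

lemma cone_span: "cone (span S)"
  unfolding cone_def by (auto intro: span_mul)

lemma cone_key:
  fixes V :: "(real^('n::{finite,linorder})^('m::{finite,linorder})) set"
  assumes H': "\<And>a. \<forall>\<zeta>\<in>V. a \<bullet> Phi \<zeta> \<ge> 0 \<Longrightarrow> \<forall>\<zeta>\<in>V. a \<bullet> Phi \<zeta> = 0"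
    and z0: "\<zeta>0 \<in> V"
  shows "- Phi \<zeta>0 \<in> cone hull (convex hull (Phi ` V))"
proof -
  let ?S = "Phi ` V"
  let ?C = "cone hull (convex hull ?S)"
  have cvx: "convex ?C" by (rule convex_cone_hull[OF convex_convex_hull])
  have cn: "cone ?C" by (rule cone_cone_hull)
  have SC: "?S \<subseteq> ?C"
    using hull_subset[of ?S convex] hull_subset[of "convex hull ?S" cone] by (rule subset_trans)
  have ne: "convex hull ?S \<noteq> {}" using z0 by (simp, blast)
  have C0: "0 \<in> ?C" using cone_hull_contains_0[of "convex hull ?S"] ne by simp
  have Cspan: "?C \<subseteq> span ?S"
  proof -
    have "convex (span ?S)" by (rule subspace_imp_convex[OF subspace_span])
    then have "convex hull ?S \<subseteq> span ?S"
      by (rule hull_minimal[of ?S "span ?S" convex, OF span_superset])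
    then show ?thesis by (rule hull_minimal[of "convex hull ?S" "span ?S" cone, OF _ cone_span])
  qed
  have key: "span ?S \<subseteq> closure ?C"
  proof
    fix x assume x: "x \<in> span ?S"
    show "x \<in> closure ?C"
    proof (rule ccontr)
      assume nx: "x \<notin> closure ?C"
      obtain a b where ab: "a \<bullet> x < b" "\<forall>y\<in>closure ?C. b < a \<bullet> y"
        using separating_hyperplane_closed_point[OF convex_closure[OF cvx] closed_closure nx] by blast
      have "0 \<in> closure ?C" using C0 closure_subset by blast
      then have "b < a \<bullet> 0" using ab(2) by blast
      then have b0: "b < 0" by simp
      have nn: "\<forall>\<zeta>\<in>V. a \<bullet> Phi \<zeta> \<ge> 0"
      proof
        fix \<zeta> assume \<zeta>: "\<zeta> \<in> V"
        show "a \<bullet> Phi \<zeta> \<ge> 0"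
        proof (rule ccontr)
          assume "\<not> a \<bullet> Phi \<zeta> \<ge> 0"
          then have d: "a \<bullet> Phi \<zeta> < 0" by simp
          define t where "t = b / (a \<bullet> Phi \<zeta>)"
          have t: "t \<ge> 0" unfolding t_def using b0 d by (simp add: zero_le_divide_iff)
          have "Phi \<zeta> \<in> ?C" using SC \<zeta> by blast
          then have "t *\<^sub>R Phi \<zeta> \<in> ?C" using cn t unfolding cone_def by blast
          then have "b < a \<bullet> (t *\<^sub>R Phi \<zeta>)" using ab(2) closure_subset by blast
          moreover have "a \<bullet> (t *\<^sub>R Phi \<zeta>) = b" unfolding t_def using d by simp
          ultimately show False by simp
        qed
      qed
      have z: "\<forall>\<zeta>\<in>V. a \<bullet> Phi \<zeta> = 0" by (rule H'[OF nn])
      have "a \<bullet> x = 0"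
      proof (rule span_induct[OF x, of "\<lambda>x. a \<bullet> x = 0"])
        show "subspace {x. a \<bullet> x = 0}" by (rule subspace_hyperplane)
      next
        fix y assume "y \<in> ?S" then show "a \<bullet> y = 0" using z by blast
      qed
      then show False using ab(1) b0 by simp
    qed
  qed
  have clos: "closure ?C = span ?S"
    using closure_minimal[OF Cspan closed_subspace[OF subspace_span]] key by blast
  have "rel_interior ?C = rel_interior (closure ?C)" by (rule convex_rel_interior_closure[OF cvx, symmetric])
  also have "\<dots> = rel_interior (span ?S)" by (simp only: clos)
  also have "\<dots> = span ?S" by (rule rel_interior_affine[OF subspace_imp_affine[OF subspace_span]])
  finally have ri: "rel_interior ?C = span ?S" .
  have "Phi \<zeta>0 \<in> ?S" using z0 by (rule imageI)
  then have "Phi \<zeta>0 \<in> span ?S" by (rule span_superset[THEN subsetD])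
  then have "- Phi \<zeta>0 \<in> span ?S" by (rule span_neg)
  then have "- Phi \<zeta>0 \<in> rel_interior ?C" unfolding ri .
  then show ?thesis by (rule rel_interior_subset[THEN subsetD])
qed

lemma weights:
  fixes V :: "(real^('n::{finite,linorder})^('m::{finite,linorder})) set"
  assumes H': "\<And>a. \<forall>\<zeta>\<in>V. a \<bullet> Phi \<zeta> \<ge> 0 \<Longrightarrow> \<forall>\<zeta>\<in>V. a \<bullet> Phi \<zeta> = 0"
    and z0: "\<zeta>0 \<in> V"
  shows "\<exists>T w. finite T \<and> T \<subseteq> V \<and> (\<forall>x. 0 \<le> w x) \<and> (\<forall>x. x \<notin> T \<longrightarrow> w x = 0) \<and>
     sum w T = 1 \<and> (\<Sum>x\<in>T. w x *\<^sub>R Phi x) = 0 \<and> \<zeta>0 \<in> T \<and> w \<zeta>0 > 0"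
proof -
  let ?S = "Phi ` V"
  have "- Phi \<zeta>0 \<in> cone hull (convex hull ?S)" by (rule cone_key[OF H' z0])
  then obtain c y where cy: "- Phi \<zeta>0 = c *\<^sub>R y" "0 \<le> c" "y \<in> convex hull ?S"
    unfolding cone_hull_expl by blast
  from cy(3) obtain S' u where S': "finite S'" "S' \<subseteq> ?S" "\<forall>x\<in>S'. 0 \<le> u x" "sum u S' = 1"
      "(\<Sum>v\<in>S'. u v *\<^sub>R v) = y"
    unfolding convex_hull_explicit by blast
  define g where "g = inv_into V Phi"
  have gV: "g v \<in> V" if "v \<in> S'" for v using that S'(2) unfolding g_def by (blast intro: inv_into_into)
  have Pg: "Phi (g v) = v" if "v \<in> S'" for v using that S'(2) unfolding g_def by (blast intro: f_inv_into_f)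
  have inj: "inj_on g S'" unfolding g_def by (rule inj_on_inv_into[OF S'(2)])
  define G where "G = g ` S'"
  define T where "T = insert \<zeta>0 G"
  define w where "w \<zeta> = (1 / (1 + c)) * (if \<zeta> = \<zeta>0 then 1 else 0) + (c / (1 + c)) * (if \<zeta> \<in> G then u (Phi \<zeta>) else 0)" for \<zeta>
  have finG: "finite G" unfolding G_def using S'(1) by simp
  have finT: "finite T" unfolding T_def using finG by simp
  have GT: "G \<subseteq> T" unfolding T_def by blast
  have TV: "T \<subseteq> V" unfolding T_def G_def using z0 gV by blast
  have c1: "1 + c > 0" using cy(2) by simp
  have uG: "0 \<le> u (Phi \<zeta>)" if zG: "\<zeta> \<in> G" for \<zeta>
  proof -
    obtain v where v: "v \<in> S'" "\<zeta> = g v" using zG unfolding G_def by blast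
    then show ?thesis using Pg S'(3) by simp
  qed
  have wnn: "\<forall>x. 0 \<le> w x"
  proof
    fix x
    have "0 \<le> (1 / (1 + c)) * (if x = \<zeta>0 then 1 else 0)" using c1 by simp
    moreover have "0 \<le> (c / (1 + c)) * (if x \<in> G then u (Phi x) else 0)"
      using c1 cy(2) uG by simp
    ultimately show "0 \<le> w x" unfolding w_def by linarith
  qed
  have wout: "\<forall>x. x \<notin> T \<longrightarrow> w x = 0" unfolding w_def T_def by auto
  have gen: "(\<Sum>x\<in>T. w x *\<^sub>R h x) = (1 / (1 + c)) *\<^sub>R h \<zeta>0 + (c / (1 + c)) *\<^sub>R (\<Sum>v\<in>S'. u v *\<^sub>R h (g v))"
    for h :: "real^('n::{finite,linorder})^('m::{finite,linorder}) \<Rightarrow> 'b::real_vector"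
  proof -
    have e: "w x *\<^sub>R h x = (1 / (1 + c)) *\<^sub>R (if x = \<zeta>0 then h x else 0) + (c / (1 + c)) *\<^sub>R (if x \<in> G then u (Phi x) *\<^sub>R h x else 0)" for x
      unfolding w_def by (simp add: scaleR_add_left)
    have "(\<Sum>x\<in>T. w x *\<^sub>R h x) = (1 / (1 + c)) *\<^sub>R (\<Sum>x\<in>T. if x = \<zeta>0 then h x else 0) + (c / (1 + c)) *\<^sub>R (\<Sum>x\<in>T. if x \<in> G then u (Phi x) *\<^sub>R h x else 0)"
      unfolding e sum.distrib scaleR_sum_right ..
    also have "(\<Sum>x\<in>T. if x = \<zeta>0 then h x else 0) = h \<zeta>0"
      using finT by (simp add: sum.delta T_def)
    also have "(\<Sum>x\<in>T. if x \<in> G then u (Phi x) *\<^sub>R h x else 0) = (\<Sum>x\<in>T \<inter> G. u (Phi x) *\<^sub>R h x)"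
      by (rule sum.inter_restrict[OF finT, symmetric])
    also have "T \<inter> G = G" using GT by blast
    also have "(\<Sum>x\<in>G. u (Phi x) *\<^sub>R h x) = (\<Sum>v\<in>S'. u (Phi (g v)) *\<^sub>R h (g v))"
      unfolding G_def by (simp add: sum.reindex[OF inj])
    also have "\<dots> = (\<Sum>v\<in>S'. u v *\<^sub>R h (g v))" by (rule sum.cong) (simp_all add: Pg)
    finally show ?thesis .
  qed
  have "sum w T = (\<Sum>x\<in>T. w x *\<^sub>R (1::real))" by simp
  also have "\<dots> = (1 / (1 + c)) + (c / (1 + c)) * (\<Sum>v\<in>S'. u v)" unfolding gen by simp
  also have "\<dots> = 1" using S'(4) c1 by (simp add: field_simps)
  finally have s1: "sum w T = 1" .
  have "(\<Sum>x\<in>T. w x *\<^sub>R Phi x) = (1 / (1 + c)) *\<^sub>R Phi \<zeta>0 + (c / (1 + c)) *\<^sub>R (\<Sum>v\<in>S'. u v *\<^sub>R Phi (g v))"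
    by (rule gen)
  also have "(\<Sum>v\<in>S'. u v *\<^sub>R Phi (g v)) = y" using S'(5) by (simp add: Pg cong: sum.cong)
  also have "(1 / (1 + c)) *\<^sub>R Phi \<zeta>0 + (c / (1 + c)) *\<^sub>R y = (1 / (1 + c)) *\<^sub>R (Phi \<zeta>0 + c *\<^sub>R y)"
    by (simp add: scaleR_add_right)
  also have "Phi \<zeta>0 + c *\<^sub>R y = 0"
  proof -
    have "c *\<^sub>R y = - Phi \<zeta>0" using cy(1) by (rule sym)
    then show ?thesis by simp
  qed
  finally have s2: "(\<Sum>x\<in>T. w x *\<^sub>R Phi x) = 0" by simp
  have "w \<zeta>0 \<ge> 1 / (1 + c)"
  proof -
    have "0 \<le> (c / (1 + c)) * (if \<zeta>0 \<in> G then u (Phi \<zeta>0) else 0)"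
      using c1 cy(2) uG by simp
    then show ?thesis unfolding w_def by simp
  qed
  then have w0: "w \<zeta>0 > 0" using c1 by (meson less_le_trans zero_less_divide_1_iff)
  have "\<zeta>0 \<in> T" unfolding T_def by simp
  then show ?thesis using finT TV wnn wout s1 s2 w0 by blast
qed

lemma measure_from_weights:
  fixes T :: "(real^('n::{finite,linorder})^('m::{finite,linorder})) set"
  assumes finT: "finite T" and TK: "T \<subseteq> K" and wnn: "\<forall>x. 0 \<le> w x" and wout: "\<forall>x. x \<notin> T \<longrightarrow> w x = 0"
    and s1: "sum w T = 1" and s2: "(\<Sum>x\<in>T. w x *\<^sub>R Phi x) = 0" and nz: "\<zeta>0 \<noteq> 0" and w0: "w \<zeta>0 > 0"
  shows "\<exists>\<nu>\<in>pc_measures K. \<not> (\<exists>x. \<nu> = return borel x)"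
proof -
  have wnn': "\<And>x. 0 \<le> w x" using wnn by blast
  have prob: "(\<integral>\<^sup>+x. ennreal (w x) \<partial>count_space UNIV) = 1"
  proof -
    have "(\<integral>\<^sup>+x. ennreal (w x) \<partial>count_space UNIV) = (\<Sum>x\<in>T. ennreal (w x))"
      by (rule nn_integral_count_space'[OF finT]) (simp_all add: wout)
    also have "\<dots> = ennreal (sum w T)" by (rule sum_ennreal) (rule wnn')
    finally show ?thesis using s1 by simp
  qed
  define q where "q = embed_pmf w"
  have pmfq: "pmf q x = w x" for x unfolding q_def by (rule pmf_embed_pmf[OF wnn' prob])
  have setq: "set_pmf q \<subseteq> T" unfolding q_def set_embed_pmf[OF wnn' prob] using wout by blast
  define \<nu> where "\<nu> = distr (measure_pmf q) borel (\<lambda>x. x)"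
  have meas: "(\<lambda>x. x) \<in> measurable (measure_pmf q) borel" unfolding measurable_pmf_measure1 by simp
  have sets: "sets \<nu> = sets borel" unfolding \<nu>_def by simp
  have p\<nu>: "prob_space \<nu>" unfolding \<nu>_def by (rule prob_space.prob_space_distr[OF prob_space_measure_pmf meas])
  have intg: "integrable \<nu> f \<and> integral\<^sup>L \<nu> f = (\<Sum>x\<in>T. w x *\<^sub>R f x)"
    if f: "f \<in> borel_measurable borel" for f :: "real^('n::{finite,linorder})^('m::{finite,linorder}) \<Rightarrow> 'b::{banach, second_countable_topology}"
  proof
    show "integrable \<nu> f" unfolding \<nu>_def integrable_distr_eq[OF meas f]
      by (rule integrable_measure_pmf_finite) (rule finite_subset[OF setq finT])
    have "integral\<^sup>L \<nu> f = integral\<^sup>L (measure_pmf q) f" unfolding \<nu>_def by (simp add: integral_distr[OF meas f])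
    also have "\<dots> = (\<Sum>x\<in>T. pmf q x *\<^sub>R f x)" by (rule integral_measure_pmf[OF finT]) (use setq in blast)
    finally show "integral\<^sup>L \<nu> f = (\<Sum>x\<in>T. w x *\<^sub>R f x)" by (simp add: pmfq)
  qed
  have mid: "(\<lambda>x::real^('n::{finite,linorder})^('m::{finite,linorder}). x) \<in> borel_measurable borel" by (rule borel_measurable_continuous_onI[OF continuous_on_id])
  have mmin: "minor I J \<in> borel_measurable borel" for I J
    by (rule borel_measurable_continuous_onI[OF poly_cont[OF poly_minor]])
  have sumx: "(\<Sum>x\<in>T. w x *\<^sub>R x) = 0"
  proof -
    have "(\<Sum>x\<in>T. w x *\<^sub>R x) $ i $ j = 0" for i j
    proof -
      have "(\<Sum>x\<in>T. w x *\<^sub>R x) $ i $ j = (\<Sum>x\<in>T. w x * Phi x $ Inr (i, j))"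
        by (simp add: sum_component Phi_Inr)
      also have "\<dots> = (\<Sum>x\<in>T. w x *\<^sub>R Phi x) $ Inr (i, j)" by (simp add: sum_component)
      also have "\<dots> = 0" using s2 by simp
      finally show ?thesis .
    qed
    then have "(\<Sum>x\<in>T. w x *\<^sub>R x) $ i = 0" for i by (simp add: Finite_Cartesian_Product.vec_eq_iff)
    then show ?thesis by (simp add: Finite_Cartesian_Product.vec_eq_iff)
  qed
  have mean: "(\<integral>X. X \<partial>\<nu>) = 0" using intg[OF mid] sumx by simp
  have minor_int: "integrable \<nu> (minor I J) \<and> integral\<^sup>L \<nu> (minor I J) = minor I J (\<integral>X. X \<partial>\<nu>)"
    if IJ: "(I, J) \<in> minor_idx" for I J
  proof
    show "integrable \<nu> (minor I J)" using intg[OF mmin] by blast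
    have "integral\<^sup>L \<nu> (minor I J) = (\<Sum>x\<in>T. w x * minor I J x)" using intg[OF mmin] by simp
    also have "\<dots> = (\<Sum>x\<in>T. w x * Phi x $ Inl (I, J))" using IJ by (simp add: Phi_Inl)
    also have "\<dots> = (\<Sum>x\<in>T. w x *\<^sub>R Phi x) $ Inl (I, J)" by (simp add: sum_component)
    also have "\<dots> = 0" using s2 by simp
    also have "\<dots> = minor I J (\<integral>X. X \<partial>\<nu>)" unfolding mean using minor_zero[OF IJ] by simp
    finally show "integral\<^sup>L \<nu> (minor I J) = minor I J (\<integral>X. X \<partial>\<nu>)" .
  qed
  have supp: "msupport \<nu> \<subseteq> T"
  proof
    fix x assume xs: "x \<in> msupport \<nu>"
    show "x \<in> T"
    proof (rule ccontr)
      assume xT: "x \<notin> T"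
      have "open (- T)" using finite_imp_closed[OF finT] by (simp add: open_Compl)
      then obtain e where e: "e > 0" "ball x e \<subseteq> - T" using xT by (auto simp: open_contains_ball)
      have "emeasure \<nu> (ball x e) = emeasure (measure_pmf q) (ball x e)"
        unfolding \<nu>_def by (simp add: emeasure_distr[OF meas])
      also have "\<dots> = 0"
      proof -
        have "AE y in measure_pmf q. y \<notin> ball x e"
          using AE_measure_pmf[of q] by eventually_elim (use setq e in blast)
        then have "ball x e \<in> null_sets (measure_pmf q)" by (simp add: AE_iff_null_sets)
        then show ?thesis by (simp add: null_setsD1)
      qed
      finally show False using xs e(1) unfolding msupport_def by blast
    qed
  qed
  have pc: "\<nu> \<in> pc_measures K"
    unfolding pc_measures_def
  proof (intro CollectI conjI ballI)
    show "prob_space \<nu>" by (rule p\<nu>)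
    show "sets \<nu> = sets borel" by (rule sets)
    show "msupport \<nu> \<subseteq> K" using supp TK by (rule subset_trans)
    show "integrable \<nu> (\<lambda>X. X)" using intg[OF mid] by blast
  next
    fix IJ :: "'m set \<times> 'n set" assume "IJ \<in> minor_idx"
    then show "case IJ of (I, J) \<Rightarrow> integrable \<nu> (minor I J) \<and> integral\<^sup>L \<nu> (minor I J) = minor I J (\<integral>X. X \<partial>\<nu>)"
      using minor_int by (cases IJ) simp
  qed
  have nd: "\<not> (\<exists>x. \<nu> = return borel x)"
  proof
    assume "\<exists>x. \<nu> = return borel x"
    then obtain x1 where x1: "\<nu> = return borel x1" by blast
    have "(\<integral>X. X \<partial>\<nu>) = x1" unfolding x1 by (rule integral_return) (simp_all add: mid)
    then have x10: "x1 = 0" using mean by simp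
    have "emeasure \<nu> {\<zeta>0} = 0" unfolding x1 x10 using nz by simp
    moreover have "emeasure \<nu> {\<zeta>0} = ennreal (w \<zeta>0)"
      unfolding \<nu>_def by (simp add: emeasure_distr[OF meas] emeasure_pmf_single pmfq)
    ultimately show False using w0 by simp
  qed
  show ?thesis using pc nd by blast
qed

theorem theorem1:
  fixes K :: "(real^('n::{finite,linorder})^('m::{finite,linorder})) set"
  assumes "subspace K"
  shows "(\<forall>\<nu>\<in>pc_measures K. \<exists>x. \<nu> = return borel x) \<longleftrightarrow>
    (\<forall>V. algebraic_cone V \<and> V \<subseteq> K \<and> V \<noteq> {} \<and> V \<noteq> {0} \<longrightarrow>
       (\<exists>\<beta> \<gamma>. ((\<exists>IJ\<in>minor_idx. \<beta> IJ \<noteq> 0) \<or> (\<exists>ij. \<gamma> ij \<noteq> 0)) \<and>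
          (\<forall>\<zeta>\<in>V. minor_comb \<beta> \<gamma> \<zeta> \<ge> 0) \<and>
          (\<exists>\<zeta>\<in>V. minor_comb \<beta> \<gamma> \<zeta> \<noteq> 0)))"
proof
  assume L: "\<forall>\<nu>\<in>pc_measures K. \<exists>x. \<nu> = return borel x"
  show "\<forall>V. algebraic_cone V \<and> V \<subseteq> K \<and> V \<noteq> {} \<and> V \<noteq> {0} \<longrightarrow>
       (\<exists>\<beta> \<gamma>. ((\<exists>IJ\<in>minor_idx. \<beta> IJ \<noteq> 0) \<or> (\<exists>ij. \<gamma> ij \<noteq> 0)) \<and>
          (\<forall>\<zeta>\<in>V. minor_comb \<beta> \<gamma> \<zeta> \<ge> 0) \<and>
          (\<exists>\<zeta>\<in>V. minor_comb \<beta> \<gamma> \<zeta> \<noteq> 0))"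
  proof (intro allI impI)
    fix V
    assume A: "algebraic_cone V \<and> V \<subseteq> K \<and> V \<noteq> {} \<and> V \<noteq> {0}"
    show "\<exists>\<beta> \<gamma>. ((\<exists>IJ\<in>minor_idx. \<beta> IJ \<noteq> 0) \<or> (\<exists>ij. \<gamma> ij \<noteq> 0)) \<and>
          (\<forall>\<zeta>\<in>V. minor_comb \<beta> \<gamma> \<zeta> \<ge> 0) \<and>
          (\<exists>\<zeta>\<in>V. minor_comb \<beta> \<gamma> \<zeta> \<noteq> 0)"
    proof (rule ccontr)
      assume N: "\<not> (\<exists>\<beta> \<gamma>. ((\<exists>IJ\<in>minor_idx. \<beta> IJ \<noteq> 0) \<or> (\<exists>ij. \<gamma> ij \<noteq> 0)) \<and>
          (\<forall>\<zeta>\<in>V. minor_comb \<beta> \<gamma> \<zeta> \<ge> 0) \<and>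
          (\<exists>\<zeta>\<in>V. minor_comb \<beta> \<gamma> \<zeta> \<noteq> 0))"
      have H': "\<forall>\<zeta>\<in>V. a \<bullet> Phi \<zeta> = 0" if "\<forall>\<zeta>\<in>V. a \<bullet> Phi \<zeta> \<ge> 0" for a
        by (rule Hprime[OF N that])
      have VK: "V \<subseteq> K" using A by simp
      have "\<exists>\<zeta>\<in>V. \<zeta> \<noteq> 0"
      proof (rule ccontr)
        assume "\<not> (\<exists>\<zeta>\<in>V. \<zeta> \<noteq> 0)"
        then have sub: "V \<subseteq> {0}" by blast
        have ne1: "V \<noteq> {}" and ne2: "V \<noteq> {0}" using A by simp_all
        show False using sub ne1 ne2 by (simp add: subset_singleton_iff)
      qed
      then obtain \<zeta>0 where z0: "\<zeta>0 \<in> V" "\<zeta>0 \<noteq> 0" by blast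
      obtain T w where Tw: "finite T" "T \<subseteq> V" "\<forall>x. 0 \<le> w x" "\<forall>x. x \<notin> T \<longrightarrow> w x = 0"
        "sum w T = 1" "(\<Sum>x\<in>T. w x *\<^sub>R Phi x) = 0" "\<zeta>0 \<in> T" "w \<zeta>0 > 0"
        using weights[OF H' z0(1)] by blast
      have TK: "T \<subseteq> K" using Tw(2) VK by (rule subset_trans)
      obtain \<nu> where "\<nu> \<in> pc_measures K" "\<not> (\<exists>x. \<nu> = return borel x)"
        using measure_from_weights[OF Tw(1) TK Tw(3) Tw(4) Tw(5) Tw(6) z0(2) Tw(8)] by blast
      then show False using L by blast
    qed
  qed
next
  assume R: "\<forall>V. algebraic_cone V \<and> V \<subseteq> K \<and> V \<noteq> {} \<and> V \<noteq> {0} \<longrightarrow>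
       (\<exists>\<beta> \<gamma>. ((\<exists>IJ\<in>minor_idx. \<beta> IJ \<noteq> 0) \<or> (\<exists>ij. \<gamma> ij \<noteq> 0)) \<and>
          (\<forall>\<zeta>\<in>V. minor_comb \<beta> \<gamma> \<zeta> \<ge> 0) \<and>
          (\<exists>\<zeta>\<in>V. minor_comb \<beta> \<gamma> \<zeta> \<noteq> 0))"
  show "\<forall>\<nu>\<in>pc_measures K. \<exists>x. \<nu> = return borel x"
  proof
    fix \<nu> assume "\<nu> \<in> pc_measures K"
    then show "\<exists>x. \<nu> = return borel x" by (rule dir2[OF assms R])
  qed
qed

end
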